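(* In the pure Call-by-Name $\lambda$-calculus with observation $\mathrm{obs}(M)={\downarrow}\{\omega(M)\}$ (as in the context), the parallel reduction $\rightsquigarrow_{pd}$ is an $\mathrm{obs}$-normalizing (multi-step) strategy for $\to_\beta$, and for every term $M$, $M\rightsquigarrow_{pd}^{\mathrm{obs}}\mathrm{BT}(M)$.
   Context: Pure $\lambda$-terms $M::=x\mid\lambda x.M\mid MM$; $\to_\beta$ is the closure of $(\lambda x.M)N\mapsto M\{N/x\}$ under all contexts. Head reduction $\to_h$ is the closure of $\beta$ under head contexts $H::=[\,]\mid\lambda x.H\mid HM$. Parallel reduction $\rightsquigarrow_{pd}$: if $M\to_hM'$ then $M\rightsquigarrow_{pd}M'$; if $M$ is $\beta$-normal then $M\rightsquigarrow_{pd}M$; otherwise ($M$ $\to_h$-normal but not $\beta$-normal) $\lambda x.P\rightsquigarrow_{pd}\lambda x.P'$ if $P\rightsquigarrow_{pd}P'$, and $P_1P_2\rightsquigarrow_{pd}P_1'P_2'$ if $P_1\rightsquigarrow_{pd}P_1'$ and $P_2\rightsquigarrow_{pd}P_2'$. Partial terms $P::=\Omega\mid x\mid PP\mid\lambda x.P$, preordered by the least reflexive-transitive relation $\le$ with $\Omega\le P$, $P_1P_2\le P_1'P_2'$ if $P_i\le P_i'$, $\lambda x.P\le\lambda x.P'$ if $P\le P'$. $\mathrm{PNF}$: $\Omega\in\mathrm{PNF}$, and $\lambda x_1\dots x_n.xA_1\dots A_m\in\mathrm{PNF}$ if all $A_i\in\mathrm{PNF}$. $\omega(M)=\Omega$ if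 $M$ is not a head normal form (a term $\lambda\vec x.xM_1\dots M_p$), and $\omega(\lambda\vec x.xM_1\dots M_p)=\lambda\vec x.x\,\omega(M_1)\dots\omega(M_p)$. ${\downarrow}\mathcal S=\{Q\in\mathrm{PNF}\mid Q\le S\text{ for some }S\in\mathcal S\}$; $\mathrm{BT}(M)=\bigcup_{M\to_\beta^*N}{\downarrow}\{\omega(N)\}$. $\mathrm{obs}$ takes values in the ideal completion of $\mathrm{PNF}$ (ordered by inclusion, suprema of chains are unions). For a relation $R$, $M\,R^{\mathrm{obs}}\,\mathbf r$ means there is a maximal $R$-sequence $(M_n)_n$ from $M$ (infinite, or finite ending in an $R$-normal term then continued constantly) with $\bigcup_n\mathrm{obs}(M_n)=\mathbf r$; $\mathrm{Lim}(M,R)$ is the set of such $\mathbf r$. A relation $R'$ is $\mathrm{obs}$-normalizing for $R$ if it is asymptotically complete (for all $M$, $M R^{\mathrm{obs}}\mathbf q$ implies $M R'^{\mathrm{obs}}\mathbf p$ for some $\mathbf p\supseteq\mathbf q$) and asymptotically uniform (for all $M$, every element of $\mathrm{Lim}(M,R')$ is maximal in $\mathrm{Lim}(M,R')$). *)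

theory Defs
  imports Main
begin

datatype dB = Var nat | App dB dB | Abs dB

primrec lift :: "dB \<Rightarrow> nat \<Rightarrow> dB" where
  "lift (Var i) k = (if i < k then Var i else Var (i + 1))"
| "lift (App s t) k = App (lift s k) (lift t k)"
| "lift (Abs s) k = Abs (lift s (k + 1))"

primrec subst :: "dB \<Rightarrow> dB \<Rightarrow> nat \<Rightarrow> dB" where
  "subst (Var i) s k = (if k < i then Var (i - 1) else if i = k then s else Var i)"
| "subst (App t u) s k = App (subst t s k) (subst u s k)"
| "subst (Abs t) s k = Abs (subst t (lift s 0) (k + 1))"

inductive beta :: "dB \<Rightarrow> dB \<Rightarrow> bool" where
  beta_rule: "beta (App (Abs s) t) (subst s t 0)"
| appL: "beta s t \<Longrightarrow> beta (App s u) (App t u)"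
| appR: "beta s t \<Longrightarrow> beta (App u s) (App u t)"
| abs: "beta s t \<Longrightarrow> beta (Abs s) (Abs t)"

inductive head :: "dB \<Rightarrow> dB \<Rightarrow> bool" where
  head_rule: "head (App (Abs s) t) (subst s t 0)"
| head_appL: "head s t \<Longrightarrow> head (App s u) (App t u)"
| head_abs: "head s t \<Longrightarrow> head (Abs s) (Abs t)"

definition beta_normal :: "dB \<Rightarrow> bool" where
  "beta_normal M \<longleftrightarrow> \<not> (\<exists>N. beta M N)"

definition head_normal :: "dB \<Rightarrow> bool" where
  "head_normal M \<longleftrightarrow> \<not> (\<exists>N. head M N)"

inductive pd :: "dB \<Rightarrow> dB \<Rightarrow> bool" where
  pd_head: "head M M' \<Longrightarrow> pd M M'"
| pd_nf: "beta_normal M \<Longrightarrow> pd M M"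
| pd_abs: "head_normal (Abs P) \<Longrightarrow> \<not> beta_normal (Abs P) \<Longrightarrow> pd P P'
            \<Longrightarrow> pd (Abs P) (Abs P')"
| pd_app: "head_normal (App P1 P2) \<Longrightarrow> \<not> beta_normal (App P1 P2)
            \<Longrightarrow> pd P1 P1' \<Longrightarrow> pd P2 P2' \<Longrightarrow> pd (App P1 P2) (App P1' P2')"

datatype ptm = POmega | PVar nat | PApp ptm ptm | PAbs ptm

inductive ple :: "ptm \<Rightarrow> ptm \<Rightarrow> bool" where
  ple_refl: "ple P P"
| ple_trans: "ple P Q \<Longrightarrow> ple Q R \<Longrightarrow> ple P R"
| ple_Omega: "ple POmega P"
| ple_app: "ple P1 P1' \<Longrightarrow> ple P2 P2' \<Longrightarrow> ple (PApp P1 P2) (PApp P1' P2')"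
| ple_abs: "ple P P' \<Longrightarrow> ple (PAbs P) (PAbs P')"

primrec pabsn :: "nat \<Rightarrow> ptm \<Rightarrow> ptm" where
  "pabsn 0 P = P"
| "pabsn (Suc n) P = PAbs (pabsn n P)"

definition papps :: "ptm \<Rightarrow> ptm list \<Rightarrow> ptm" where
  "papps P As = foldl PApp P As"

inductive pnf :: "ptm \<Rightarrow> bool" where
  pnf_Omega: "pnf POmega"
| pnf_hd: "(\<forall>A\<in>set As. pnf A) \<Longrightarrow> pnf (pabsn n (papps (PVar x) As))"

text \<open>Head normal forms \<lambda>x1..xn. x M1..Mp; omega by recursion on this shape\<close>
primrec neutral :: "dB \<Rightarrow> bool" where
  "neutral (Var x) = True"
| "neutral (App M N) = neutral M"
| "neutral (Abs M) = False"

primrec omega :: "dB \<Rightarrow> ptm" where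
  "omega (Var x) = PVar x"
| "omega (Abs M) = PAbs (omega M)"
| "omega (App M N) = (if neutral M then PApp (omega M) (omega N) else POmega)"

definition down :: "ptm set \<Rightarrow> ptm set" where
  "down S = {Q. pnf Q \<and> (\<exists>P\<in>S. ple Q P)}"

definition obs :: "dB \<Rightarrow> ptm set" where
  "obs M = down {omega M}"

definition BT :: "dB \<Rightarrow> ptm set" where
  "BT M = (\<Union>N\<in>{N. beta\<^sup>*\<^sup>* M N}. down {omega N})"

definition max_seq :: "(dB \<Rightarrow> dB \<Rightarrow> bool) \<Rightarrow> dB \<Rightarrow> (nat \<Rightarrow> dB) \<Rightarrow> bool" where
  "max_seq R M f \<longleftrightarrow> f 0 = M \<and>
     (\<forall>n. R (f n) (f (Suc n)) \<or> ((\<nexists>N. R (f n) N) \<and> f (Suc n) = f n))"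

definition obs_lim :: "(dB \<Rightarrow> dB \<Rightarrow> bool) \<Rightarrow> dB \<Rightarrow> ptm set \<Rightarrow> bool" where
  "obs_lim R M r \<longleftrightarrow> (\<exists>f. max_seq R M f \<and> (\<Union>n. obs (f n)) = r)"

definition Lim :: "dB \<Rightarrow> (dB \<Rightarrow> dB \<Rightarrow> bool) \<Rightarrow> ptm set set" where
  "Lim M R = {r. obs_lim R M r}"

definition asympt_complete :: "(dB \<Rightarrow> dB \<Rightarrow> bool) \<Rightarrow> (dB \<Rightarrow> dB \<Rightarrow> bool) \<Rightarrow> bool" where
  "asympt_complete R' R \<longleftrightarrow>
     (\<forall>M q. obs_lim R M q \<longrightarrow> (\<exists>p. obs_lim R' M p \<and> q \<subseteq> p))"

definition asympt_uniform :: "(dB \<Rightarrow> dB \<Rightarrow> bool) \<Rightarrow> bool" where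
  "asympt_uniform R' \<longleftrightarrow>
     (\<forall>M. \<forall>r\<in>Lim M R'. \<forall>r'\<in>Lim M R'. r \<subseteq> r' \<longrightarrow> r' = r)"

definition obs_normalizing :: "(dB \<Rightarrow> dB \<Rightarrow> bool) \<Rightarrow> (dB \<Rightarrow> dB \<Rightarrow> bool) \<Rightarrow> bool" where
  "obs_normalizing R' R \<longleftrightarrow> asympt_complete R' R \<and> asympt_uniform R'"

definition multistep_strategy :: "(dB \<Rightarrow> dB \<Rightarrow> bool) \<Rightarrow> (dB \<Rightarrow> dB \<Rightarrow> bool) \<Rightarrow> bool" where
  "multistep_strategy R' R \<longleftrightarrow>
     (\<forall>M N. R' M N \<longrightarrow> R\<^sup>*\<^sup>* M N) \<and>
     (\<forall>M N. R' M N \<longrightarrow> (\<exists>N'. R M N') \<longrightarrow> R\<^sup>+\<^sup>+ M N) \<and>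
     (\<forall>M. \<exists>N. R' M N)"

end

theory Submission
  imports Defs
begin


lemma lift_lift:
  "i < k + 1 \<Longrightarrow> lift (lift t i) (Suc k) = lift (lift t k) i"
  by (induct t arbitrary: i k) auto

lemma lift_subst [simp]:
  "j < i + 1 \<Longrightarrow> lift (subst t s j) i = subst (lift t (i + 1)) (lift s i) j"
  by (induct t arbitrary: i j s) (auto simp: lift_lift)

lemma lift_subst_lt:
  "i < j + 1 \<Longrightarrow> lift (subst t s j) i = subst (lift t i) (lift s i) (j + 1)"
  by (induct t arbitrary: i j s) (auto simp: lift_lift)

lemma subst_lift [simp]: "subst (lift t k) s k = t"
  by (induct t arbitrary: k s) auto

lemma subst_subst:
  "i < j + 1 \<Longrightarrow> subst (subst t (lift v i) (Suc j)) (subst u v j) i = subst (subst t u i) v j"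
  by (induct t arbitrary: i j u v) (auto simp: lift_lift [symmetric] lift_subst_lt)



lemma beta_lift: "beta s t \<Longrightarrow> beta (lift s i) (lift t i)"
proof (induct arbitrary: i rule: beta.induct)
  case (beta_rule s t)
  then show ?case using beta.beta_rule[of "lift s (i+1)" "lift t i"] by simp
qed (auto intro: beta.intros)

lemma beta_subst: "beta s t \<Longrightarrow> beta (subst s u k) (subst t u k)"
proof (induct arbitrary: u k rule: beta.induct)
  case (beta_rule s t)
  then show ?case
    using beta.beta_rule[of "subst s (lift u 0) (Suc k)" "subst t u k"]
    by (simp add: subst_subst[where i=0, simplified])
qed (auto intro: beta.intros)

lemma rtc_appL: "beta\<^sup>*\<^sup>* s t \<Longrightarrow> beta\<^sup>*\<^sup>* (App s u) (App t u)"
  by (induct rule: rtranclp_induct) (auto intro: rtranclp.rtrancl_into_rtrancl beta.appL)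
lemma rtc_appR: "beta\<^sup>*\<^sup>* s t \<Longrightarrow> beta\<^sup>*\<^sup>* (App u s) (App u t)"
  by (induct rule: rtranclp_induct) (auto intro: rtranclp.rtrancl_into_rtrancl beta.appR)
lemma rtc_abs: "beta\<^sup>*\<^sup>* s t \<Longrightarrow> beta\<^sup>*\<^sup>* (Abs s) (Abs t)"
  by (induct rule: rtranclp_induct) (auto intro: rtranclp.rtrancl_into_rtrancl beta.abs)
lemma rtc_app: "beta\<^sup>*\<^sup>* s t \<Longrightarrow> beta\<^sup>*\<^sup>* u v \<Longrightarrow> beta\<^sup>*\<^sup>* (App s u) (App t v)"
  by (metis rtc_appL rtc_appR rtranclp_trans)

section \<open>parallel reduction and confluence\<close>

inductive par :: "dB \<Rightarrow> dB \<Rightarrow> bool" where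
  par_var: "par (Var n) (Var n)"
| par_abs: "par s t \<Longrightarrow> par (Abs s) (Abs t)"
| par_app: "par s s' \<Longrightarrow> par t t' \<Longrightarrow> par (App s t) (App s' t')"
| par_beta: "par s s' \<Longrightarrow> par t t' \<Longrightarrow> par (App (Abs s) t) (subst s' t' 0)"

inductive_cases par_AbsE: "par (Abs s) t"
inductive_cases par_VarE: "par (Var n) t"

lemma par_refl [simp]: "par t t"
  by (induct t) (auto intro: par.intros)

lemma beta_par: "beta s t \<Longrightarrow> par s t"
  by (induct rule: beta.induct) (auto intro: par.intros)

lemma par_beta_star: "par s t \<Longrightarrow> beta\<^sup>*\<^sup>* s t"
proof (induct rule: par.induct)
  case (par_beta s s' t t')
  have "beta\<^sup>*\<^sup>* (App (Abs s) t) (App (Abs s') t')"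
    using par_beta by (auto intro: rtc_app rtc_abs)
  then show ?case by (meson beta.beta_rule rtranclp.rtrancl_into_rtrancl)
qed (auto intro: rtc_app rtc_abs)

lemma par_lift: "par s t \<Longrightarrow> par (lift s i) (lift t i)"
proof (induct arbitrary: i rule: par.induct)
  case (par_beta s s' t t')
  then show ?case using par.par_beta[of "lift s (i+1)" "lift s' (i+1)" "lift t i" "lift t' i"] by simp
qed (auto intro: par.intros)

lemma par_subst: "par s s' \<Longrightarrow> par t t' \<Longrightarrow> par (subst s t k) (subst s' t' k)"
proof (induct arbitrary: t t' k rule: par.induct)
  case (par_var n)
  then show ?case by (auto intro: par.intros)
next
  case (par_abs s s')
  have "par (subst s (lift t 0) (Suc k)) (subst s' (lift t' 0) (Suc k))"
    using par_abs par_lift by blast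
  then show ?case by (simp add: par.par_abs)
next
  case (par_app s s' u u')
  then show ?case by (auto intro: par.intros)
next
  case (par_beta s s' u u')
  have "par (App (Abs (subst s (lift t 0) (Suc k))) (subst u t k))
            (subst (subst s' (lift t' 0) (Suc k)) (subst u' t' k) 0)"
    using par_beta by (intro par.intros) (auto intro!: par_lift)
  then show ?case by (simp add: subst_subst[where i=0, simplified])
qed

fun cd :: "dB \<Rightarrow> dB" where
  "cd (Var n) = Var n"
| "cd (Abs s) = Abs (cd s)"
| "cd (App (Abs s) t) = subst (cd s) (cd t) 0"
| "cd (App s t) = App (cd s) (cd t)"

lemma par_cd: "par s t \<Longrightarrow> par t (cd s)"
proof (induct rule: par.induct)
  case (par_app s s' u u')
  show ?case
  proof (cases s)
    case (Abs s0)
    with par_app obtain s0' where "s' = Abs s0'" "par s0 s0'" by (auto elim: par_AbsE)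
    with par_app Abs show ?thesis by (auto elim: par_AbsE intro: par.intros)
  qed (use par_app in \<open>auto intro: par.intros\<close>)
qed (auto intro: par.intros par_subst)

lemma par_strip: "par\<^sup>*\<^sup>* s t1 \<Longrightarrow> par s t2 \<Longrightarrow> \<exists>u. par t1 u \<and> par\<^sup>*\<^sup>* t2 u"
proof (induct arbitrary: t2 rule: rtranclp_induct)
  case base
  then show ?case by auto
next
  case (step y z)
  then obtain u where "par y u" "par\<^sup>*\<^sup>* t2 u" by blast
  with step have "par z (cd y)" "par u (cd y)" by (auto intro: par_cd)
  then show ?case using \<open>par\<^sup>*\<^sup>* t2 u\<close> by (meson rtranclp.rtrancl_into_rtrancl)
qed

lemma par_confl: "par\<^sup>*\<^sup>* s t2 \<Longrightarrow> par\<^sup>*\<^sup>* s t1 \<Longrightarrow> \<exists>u. par\<^sup>*\<^sup>* t1 u \<and> par\<^sup>*\<^sup>* t2 u"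
proof (induct arbitrary: t1 rule: rtranclp_induct)
  case base
  then show ?case by auto
next
  case (step y z)
  then obtain u where u: "par\<^sup>*\<^sup>* t1 u" "par\<^sup>*\<^sup>* y u" by blast
  from par_strip[OF u(2) step(2)] obtain v where "par u v" "par\<^sup>*\<^sup>* z v" by blast
  then show ?case using u by (meson rtranclp.rtrancl_into_rtrancl)
qed

lemma beta_star_eq: "beta\<^sup>*\<^sup>* = par\<^sup>*\<^sup>*"
proof (rule antisym)
  show "beta\<^sup>*\<^sup>* \<le> par\<^sup>*\<^sup>*" by (rule rtranclp_mono) (auto intro: beta_par)
  have "par\<^sup>*\<^sup>* \<le> (beta\<^sup>*\<^sup>*)\<^sup>*\<^sup>*" by (rule rtranclp_mono) (auto intro: par_beta_star)
  then show "par\<^sup>*\<^sup>* \<le> beta\<^sup>*\<^sup>*" by simp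
qed

lemma beta_confl: "beta\<^sup>*\<^sup>* s t1 \<Longrightarrow> beta\<^sup>*\<^sup>* s t2 \<Longrightarrow> \<exists>u. beta\<^sup>*\<^sup>* t1 u \<and> beta\<^sup>*\<^sup>* t2 u"
  unfolding beta_star_eq using par_confl by blast



section \<open>head normal forms\<close>

fun hnfp :: "dB \<Rightarrow> bool" where
  "hnfp (Var x) = True"
| "hnfp (Abs M) = hnfp M"
| "hnfp (App M N) = neutral M"

lemma neutral_hnfp: "neutral M \<Longrightarrow> hnfp M"
  by (induct M) auto

lemma hnfp_nonabs: "(\<nexists>b. M = Abs b) \<Longrightarrow> hnfp M = neutral M"
  by (cases M) auto

inductive dh :: "dB \<Rightarrow> dB \<Rightarrow> bool" where
  dh_rule: "dh (App (Abs s) t) (subst s t 0)"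
| dh_app: "dh s t \<Longrightarrow> (\<nexists>b. s = Abs b) \<Longrightarrow> dh (App s u) (App t u)"
| dh_abs: "dh s t \<Longrightarrow> dh (Abs s) (Abs t)"

inductive_cases dh_AbsE: "dh (Abs s) t"
inductive_cases dh_AppE: "dh (App s u) t"
inductive_cases dh_VarE: "dh (Var x) t"
inductive_cases head_AbsE: "head (Abs s) t"
inductive_cases head_AppE: "head (App s u) t"
inductive_cases head_VarE: "head (Var x) t"

lemma dh_head: "dh s t \<Longrightarrow> head s t"
  by (induct rule: dh.induct) (auto intro: head.intros)

lemma head_beta: "head s t \<Longrightarrow> beta s t"
  by (induct rule: head.induct) (auto intro: beta.intros)

lemma dh_det: "dh M N1 \<Longrightarrow> dh M N2 \<Longrightarrow> N1 = N2"
proof (induct arbitrary: N2 rule: dh.induct)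
  case (dh_rule s t)
  from dh_rule show ?case by (cases rule: dh_AppE) auto
next
  case (dh_app s t u)
  from dh_app(4) have "\<exists>s'. N2 = App s' u \<and> dh s s'" using dh_app(3)
    by (cases rule: dh.cases) auto
  with dh_app(2) show ?case by auto
next
  case (dh_abs s t)
  from dh_abs(3) have "\<exists>s'. N2 = Abs s' \<and> dh s s'"
    by (cases rule: dh.cases) auto
  with dh_abs(2) show ?case by auto
qed

lemma not_hnfp_dh: "\<not> hnfp M \<Longrightarrow> \<exists>N. dh M N"
proof (induct M)
  case (Var x)
  then show ?case by simp
next
  case (App M1 M2)
  show ?case
  proof (cases "\<exists>b. M1 = Abs b")
    case True
    then show ?thesis by (auto intro: dh.intros)
  next
    case False
    with App have "\<not> hnfp M1" using hnfp_nonabs by auto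
    with App False show ?thesis by (auto intro: dh.intros)
  qed
next
  case (Abs M)
  then show ?case by (auto intro: dh.intros)
qed

lemma hnfp_no_head: "head M N \<Longrightarrow> \<not> hnfp M"
  by (induct rule: head.induct) (auto intro: neutral_hnfp)

lemma head_normal_iff: "head_normal M \<longleftrightarrow> hnfp M"
  unfolding head_normal_def using hnfp_no_head not_hnfp_dh dh_head by blast

lemma head_subst: "head s t \<Longrightarrow> head (subst s u k) (subst t u k)"
proof (induct arbitrary: u k rule: head.induct)
  case (head_rule s t)
  then show ?case
    using head.head_rule[of "subst s (lift u 0) (Suc k)" "subst t u k"]
    by (simp add: subst_subst[where i=0, simplified])
qed (auto intro: head.intros)

lemma dh_subst: "dh s t \<Longrightarrow> dh (subst s u k) (subst t u k)"
proof (induct arbitrary: u k rule: dh.induct)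
  case (dh_rule s t)
  then show ?case
    using dh.dh_rule[of "subst s (lift u 0) (Suc k)" "subst t u k"]
    by (simp add: subst_subst[where i=0, simplified])
next
  case (dh_app s t u')
  then have "\<exists>a b. s = App a b" by (auto elim: dh.cases)
  then have "\<nexists>b. subst s u k = Abs b" by auto
  with dh_app show ?case by (auto intro: dh.intros)
qed (auto intro: dh.intros)

lemma head_comm: "head M M' \<Longrightarrow> dh M D \<Longrightarrow> M' = D \<or> (\<exists>D'. dh M' D' \<and> head D D')"
proof (induct arbitrary: D rule: head.induct)
  case (head_rule s t)
  from head_rule have "D = subst s t 0" by (cases rule: dh.cases) auto
  then show ?case by simp
next
  case (head_appL s t u)
  from head_appL(3) have "(\<exists>s0. s = Abs s0 \<and> D = subst s0 u 0) \<or>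
     (\<exists>s'. D = App s' u \<and> dh s s' \<and> (\<nexists>b. s = Abs b))"
    by (cases rule: dh.cases) auto
  then show ?case
  proof
    assume "\<exists>s0. s = Abs s0 \<and> D = subst s0 u 0"
    then obtain s0 where 1: "s = Abs s0" "D = subst s0 u 0" by blast
    from head_appL(1) 1 have "\<exists>t0. t = Abs t0 \<and> head s0 t0" by (cases rule: head.cases) auto
    then obtain t0 where "t = Abs t0" "head s0 t0" by blast
    with 1 show ?thesis by (auto intro: dh.intros head_subst)
  next
    assume "\<exists>s'. D = App s' u \<and> dh s s' \<and> (\<nexists>b. s = Abs b)"
    then obtain s' where 2: "D = App s' u" "dh s s'" "\<nexists>b. s = Abs b" by blast
    from head_appL(2)[OF 2(2)] show ?thesis
    proof
      assume "t = s'" with 2 show ?thesis by simp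
    next
      assume "\<exists>D'. dh t D' \<and> head s' D'"
      then obtain D'' where D'': "dh t D''" "head s' D''" by blast
      show ?thesis
      proof (cases "\<exists>b. t = Abs b")
        case True
        from head_appL(1) True 2(3) have "dh s t"
          by (cases rule: head.cases) (auto intro: dh.intros)
        with 2 dh_det have "t = s'" by blast
        with 2 show ?thesis by simp
      next
        case False
        with D'' have "dh (App t u) (App D'' u)" "head (App s' u) (App D'' u)"
          by (auto intro: dh.intros head.intros)
        with 2 show ?thesis by blast
      qed
    qed
  qed
next
  case (head_abs s t)
  from head_abs(3) obtain s' where "D = Abs s'" "dh s s'" by (cases rule: dh.cases) auto
  with head_abs(2) show ?case by (auto intro: dh.intros head.intros)
qed

inductive hn :: "dB \<Rightarrow> nat \<Rightarrow> bool" where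
  hn0: "hnfp M \<Longrightarrow> hn M 0"
| hnS: "dh M N \<Longrightarrow> hn N k \<Longrightarrow> hn M (Suc k)"

lemma hn_dh: "hn M k \<Longrightarrow> dh M N \<Longrightarrow> \<exists>k'. k = Suc k' \<and> hn N k'"
  by (induct rule: hn.cases) (auto dest: dh_det hnfp_no_head dh_head)

lemma hn_back_head: "head M M' \<Longrightarrow> hn M' k \<Longrightarrow> \<exists>j. hn M j"
proof (induct k arbitrary: M M')
  case 0
  from 0 obtain D where D: "dh M D" using hnfp_no_head not_hnfp_dh by blast
  from head_comm[OF 0(1) D] show ?case
  proof
    assume "M' = D" with 0 D show ?case by (auto intro: hn.intros)
  next
    assume "\<exists>D'. dh M' D' \<and> head D D'"
    with 0 show ?case using hn_dh by fastforce
  qed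
next
  case (Suc k)
  from Suc obtain D where D: "dh M D" using hnfp_no_head not_hnfp_dh by blast
  from head_comm[OF Suc(2) D] show ?case
  proof
    assume "M' = D" with Suc D show ?case by (auto intro: hn.intros)
  next
    assume "\<exists>D'. dh M' D' \<and> head D D'"
    then obtain D' where "dh M' D'" "head D D'" by blast
    with Suc(3) have "hn D' k" using hn_dh by fastforce
    with Suc(1) \<open>head D D'\<close> obtain j where "hn D j" by blast
    with D show ?case by (auto intro: hn.intros)
  qed
qed

lemma hn_fwd_head: "head M M' \<Longrightarrow> hn M k \<Longrightarrow> \<exists>k'\<le>k. hn M' k'"
proof (induct k arbitrary: M M')
  case 0
  then show ?case by (auto elim: hn.cases dest: hnfp_no_head)
next
  case (Suc k)
  from Suc obtain D where D: "dh M D" using hnfp_no_head not_hnfp_dh by blast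
  with Suc(3) have hD: "hn D k" using hn_dh by fastforce
  from head_comm[OF Suc(2) D] show ?case
  proof
    assume "M' = D" with hD show ?case by (intro exI[of _ k]) auto
  next
    assume "\<exists>D'. dh M' D' \<and> head D D'"
    then obtain D' where "dh M' D'" "head D D'" by blast
    with Suc(1) hD obtain k' where "k' \<le> k" "hn D' k'" by blast
    with \<open>dh M' D'\<close> show ?case by (auto intro: hn.intros)
  qed
qed

lemma hn_Abs: "hn B i \<Longrightarrow> hn (Abs B) i"
  by (induct rule: hn.induct) (auto intro: hn.intros dh.intros)

lemma hn_subst_back: "hn (subst P A j) k \<Longrightarrow> \<exists>i\<le>k. hn P i"
proof (induct k arbitrary: P)
  case 0
  show ?case
  proof (cases "hnfp P")
    case True then show ?thesis by (auto intro: hn.intros)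
  next
    case False
    then obtain P' where "dh P P'" using not_hnfp_dh by blast
    then have "dh (subst P A j) (subst P' A j)" by (rule dh_subst)
    with 0 show ?thesis using hn_dh by fastforce
  qed
next
  case (Suc k)
  show ?case
  proof (cases "hnfp P")
    case True then show ?thesis by (auto intro: hn.intros)
  next
    case False
    then obtain P' where "dh P P'" using not_hnfp_dh by blast
    then have "dh (subst P A j) (subst P' A j)" by (rule dh_subst)
    with Suc(2) have "hn (subst P' A j) k" using hn_dh by fastforce
    with Suc(1) obtain i where "i \<le> k" "hn P' i" by blast
    with \<open>dh P P'\<close> show ?thesis by (auto intro: hn.intros)
  qed
qed

lemma hn_redex_body: "hn (App (Abs B) Q) j \<Longrightarrow> \<exists>i<j. hn B i"
proof -
  assume h: "hn (App (Abs B) Q) j"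
  have "dh (App (Abs B) Q) (subst B Q 0)" by (rule dh_rule)
  with h obtain j' where j': "j = Suc j'" "hn (subst B Q 0) j'" using hn_dh by blast
  then obtain i where "i \<le> j'" "hn B i" using hn_subst_back by blast
  with j' show ?thesis by (intro exI[of _ i]) auto
qed

lemma hn_app_back: "hn (App P A) k \<Longrightarrow> \<exists>i\<le>k. hn P i"
proof (induct k arbitrary: P)
  case 0
  then have "neutral P" by (auto elim: hn.cases)
  then show ?case by (auto intro: hn.intros neutral_hnfp)
next
  case (Suc k)
  show ?case
  proof (cases "\<exists>b. P = Abs b")
    case True
    then obtain B where P: "P = Abs B" by blast
    with Suc(2) obtain i where "i < Suc k" "hn B i" using hn_redex_body by blast
    with P show ?thesis by (intro exI[of _ i]) (auto intro: hn_Abs)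
  next
    case False
    show ?thesis
    proof (cases "hnfp P")
      case True then show ?thesis by (auto intro: hn.intros)
    next
      case nh: False
      then obtain P' where "dh P P'" using not_hnfp_dh by blast
      with False have "dh (App P A) (App P' A)" by (auto intro: dh.intros)
      with Suc(2) have "hn (App P' A) k" using hn_dh by fastforce
      with Suc(1) obtain i where "i \<le> k" "hn P' i" by blast
      with \<open>dh P P'\<close> show ?thesis by (auto intro: hn.intros)
    qed
  qed
qed

section \<open>strong normalization of head (spine) reduction\<close>

definition hsn :: "dB \<Rightarrow> bool" where
  "hsn M = Wellfounded.accp (\<lambda>a b. head b a) M"

lemma hsnI: "(\<And>N. head M N \<Longrightarrow> hsn N) \<Longrightarrow> hsn M"
  unfolding hsn_def by (rule accp.accI) blast

lemma hsn_induct[consumes 1, case_names step]: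
  assumes "hsn M"
  and "\<And>M. hsn M \<Longrightarrow> (\<And>N. head M N \<Longrightarrow> P N) \<Longrightarrow> P M"
  shows "P M"
  using assms(1) unfolding hsn_def
proof (induct rule: accp.induct)
  case (accI x)
  then show ?case using assms(2) unfolding hsn_def by (metis accp.accI)
qed

lemma hsn_Abs: "hsn P \<Longrightarrow> hsn (Abs P)"
proof (induct rule: hsn_induct)
  case (step M)
  show ?case by (rule hsnI) (use step in \<open>auto elim: head_AbsE\<close>)
qed

lemma head_Abs_inv: "head (Abs B) Y \<Longrightarrow> \<exists>B'. Y = Abs B' \<and> head B B'"
  by (cases rule: head.cases) auto

lemma head_App_inv: "head (App P Q) Y \<Longrightarrow>
   (\<exists>B. P = Abs B \<and> Y = subst B Q 0) \<or> (\<exists>P'. Y = App P' Q \<and> head P P')"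
  by (cases rule: head.cases) auto

lemma hn_Abs_inv: "hn (Abs B) k \<Longrightarrow> hn B k"
proof (induct k arbitrary: B)
  case 0 then show ?case by (cases rule: hn.cases) (auto intro: hn.intros)
next
  case (Suc k)
  from Suc(2) obtain N where "dh (Abs B) N" "hn N k" by (cases rule: hn.cases) auto
  moreover from \<open>dh (Abs B) N\<close> obtain B' where "N = Abs B'" "dh B B'"
    by (cases rule: dh.cases) auto
  ultimately show ?case using Suc(1) by (auto intro: hn.intros)
qed

lemma SN_redex:
  assumes outer: "\<forall>j<k. \<forall>N. hn N j \<longrightarrow> hsn N"
  shows "hn (App (Abs B) Q) j \<Longrightarrow> j \<le> k \<Longrightarrow> hsn (App (Abs B) Q)"
proof -
  assume h: "hn (App (Abs B) Q) j" and jk: "j \<le> k"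
  from h obtain i where "i < j" "hn B i" using hn_redex_body by blast
  with jk outer have "hsn B" by (meson order_less_le_trans)
  then show ?thesis using h jk
  proof (induct arbitrary: j rule: hsn_induct)
    case (step B)
    show ?case
    proof (rule hsnI)
      fix Y assume Y: "head (App (Abs B) Q) Y"
      from head_App_inv[OF Y] show "hsn Y"
      proof
        assume "\<exists>B0. Abs B = Abs B0 \<and> Y = subst B0 Q 0"
        then have Y1: "Y = subst B Q 0" by auto
        have "dh (App (Abs B) Q) (subst B Q 0)" by (rule dh_rule)
        with step(3) obtain j' where "j = Suc j'" "hn (subst B Q 0) j'" using hn_dh by blast
        with step(4) outer have "hsn (subst B Q 0)" by (meson Suc_le_lessD)
        with Y1 show ?thesis by simp
      next
        assume "\<exists>P'. Y = App P' Q \<and> head (Abs B) P'"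
        then obtain P' where P': "Y = App P' Q" "head (Abs B) P'" by blast
        then obtain B' where B': "P' = Abs B'" "head B B'" using head_Abs_inv by blast
        from Y step(3) obtain j' where "j' \<le> j" "hn Y j'" using hn_fwd_head by blast
        with step(2)[OF B'(2)] P' B' step(4) show ?thesis by auto
      qed
    qed
  qed
qed

lemma SN_app_nonabs:
  assumes outer: "\<forall>j<k. \<forall>N. hn N j \<longrightarrow> hsn N"
  shows "hsn P \<Longrightarrow> (\<nexists>b. P = Abs b) \<Longrightarrow> hn (App P Q) j \<Longrightarrow> j \<le> k \<Longrightarrow> hsn (App P Q)"
proof (induct arbitrary: j rule: hsn_induct)
  case (step P)
  show ?case
  proof (rule hsnI)
    fix Y assume Y: "head (App P Q) Y"
    with step(3) obtain P' where Y': "Y = App P' Q" "head P P'"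
      using head_App_inv by blast
    from Y step(4) obtain j' where "j' \<le> j" "hn Y j'" using hn_fwd_head by blast
    show "hsn Y"
    proof (cases "\<exists>b. P' = Abs b")
      case True
      with Y' \<open>hn Y j'\<close> \<open>j' \<le> j\<close> step(5) outer SN_redex show ?thesis
        by (metis order_trans)
    next
      case False
      with step(2)[OF Y'(2) False] Y' \<open>hn Y j'\<close> \<open>j' \<le> j\<close> step(5) show ?thesis by auto
    qed
  qed
qed

lemma SN_struct:
  "(\<forall>j<k. \<forall>N. hn N j \<longrightarrow> hsn N) \<Longrightarrow> hn M k \<Longrightarrow> hsn M"
proof (induct M arbitrary: k)
  case (Var x)
  show ?case by (rule hsnI) (auto elim: head.cases)
next
  case (Abs P)
  from Abs(3) have "hn P k" by (rule hn_Abs_inv)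
  with Abs show ?case by (auto intro: hsn_Abs)
next
  case (App P Q)
  show ?case
  proof (cases "\<exists>b. P = Abs b")
    case True
    with App SN_redex show ?thesis by blast
  next
    case False
    from App(4) obtain i where "i \<le> k" "hn P i" using hn_app_back by blast
    moreover have "\<forall>j<i. \<forall>N. hn N j \<longrightarrow> hsn N" using App(3) \<open>i \<le> k\<close> by (meson order_less_le_trans)
    ultimately have "hsn P" using App(1) by blast
    with SN_app_nonabs[OF App(3)] False App(4) show ?thesis by blast
  qed
qed

lemma hn_hsn: "hn M k \<Longrightarrow> hsn M"
proof (induct k arbitrary: M rule: less_induct)
  case (less k)
  then show ?case using SN_struct by blast
qed



section \<open>standardization for head normal forms\<close>

lemma head_lift: "head s t \<Longrightarrow> head (lift s i) (lift t i)"
proof (induct arbitrary: i rule: head.induct)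
  case (head_rule s t)
  then show ?case using head.head_rule[of "lift s (i+1)" "lift t i"] by simp
qed (auto intro: head.intros)

lemma hstar_appL: "head\<^sup>*\<^sup>* s t \<Longrightarrow> head\<^sup>*\<^sup>* (App s u) (App t u)"
  by (induct rule: rtranclp_induct) (auto intro: rtranclp.rtrancl_into_rtrancl head.head_appL)
lemma hstar_abs: "head\<^sup>*\<^sup>* s t \<Longrightarrow> head\<^sup>*\<^sup>* (Abs s) (Abs t)"
  by (induct rule: rtranclp_induct) (auto intro: rtranclp.rtrancl_into_rtrancl head.head_abs)
lemma hstar_lift: "head\<^sup>*\<^sup>* s t \<Longrightarrow> head\<^sup>*\<^sup>* (lift s i) (lift t i)"
  by (induct rule: rtranclp_induct) (auto intro: rtranclp.rtrancl_into_rtrancl head_lift)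
lemma hstar_subst: "head\<^sup>*\<^sup>* s t \<Longrightarrow> head\<^sup>*\<^sup>* (subst s u k) (subst t u k)"
  by (induct rule: rtranclp_induct) (auto intro: rtranclp.rtrancl_into_rtrancl head_subst)

inductive sint :: "dB \<Rightarrow> dB \<Rightarrow> bool" where
  sint_var: "sint (Var n) (Var n)"
| sint_abs: "sint s t \<Longrightarrow> sint (Abs s) (Abs t)"
| sint_app: "sint s s' \<Longrightarrow> par t t' \<Longrightarrow> sint (App s t) (App s' t')"

lemma sint_par: "sint s t \<Longrightarrow> par s t"
  by (induct rule: sint.induct) (auto intro: par.intros)

lemma sint_refl: "sint t t"
  by (induct t) (auto intro: sint.intros)

lemma sint_lift: "sint s t \<Longrightarrow> sint (lift s i) (lift t i)"
  by (induct arbitrary: i rule: sint.induct) (auto intro: sint.intros par_lift)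

lemma sint_subst:
  "sint L N \<Longrightarrow> par M2 N2 \<Longrightarrow> (\<exists>L2. head\<^sup>*\<^sup>* M2 L2 \<and> sint L2 N2) \<Longrightarrow>
   \<exists>L'. head\<^sup>*\<^sup>* (subst L M2 k) L' \<and> sint L' (subst N N2 k)"
proof (induct arbitrary: M2 N2 k rule: sint.induct)
  case (sint_var n)
  then show ?case by (auto intro: sint.intros)
next
  case (sint_abs s t)
  from sint_abs(4) obtain L2 where "head\<^sup>*\<^sup>* M2 L2" "sint L2 N2" by blast
  then have "\<exists>L2. head\<^sup>*\<^sup>* (lift M2 0) L2 \<and> sint L2 (lift N2 0)"
    by (auto intro: hstar_lift sint_lift)
  with sint_abs(2)[OF par_lift[OF sint_abs(3)]] obtain L' where
    "head\<^sup>*\<^sup>* (subst s (lift M2 0) (Suc k)) L'" "sint L' (subst t (lift N2 0) (Suc k))"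
    by fastforce
  then show ?case by (auto intro: hstar_abs sint.intros)
next
  case (sint_app s s' t t')
  from sint_app(2)[OF sint_app(4,5)] obtain L' where
    "head\<^sup>*\<^sup>* (subst s M2 k) L'" "sint L' (subst s' N2 k)" by blast
  moreover have "par (subst t M2 k) (subst t' N2 k)" using sint_app(3,4) by (rule par_subst)
  ultimately show ?case by (auto intro: hstar_appL sint.intros)
qed

lemma par_std: "par M N \<Longrightarrow> \<exists>L. head\<^sup>*\<^sup>* M L \<and> sint L N"
proof (induct rule: par.induct)
  case (par_var n)
  then show ?case by (auto intro: sint.intros)
next
  case (par_abs s t)
  then show ?case by (auto intro: hstar_abs sint.intros)
next
  case (par_app s s' t t')
  then show ?case by (auto intro: hstar_appL sint.intros)
next
  case (par_beta s s' t t')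
  from par_beta(2) obtain Ls where Ls: "head\<^sup>*\<^sup>* s Ls" "sint Ls s'" by blast
  from sint_subst[OF Ls(2) par_beta(3) par_beta(4)] obtain L' where
    L': "head\<^sup>*\<^sup>* (subst Ls t 0) L'" "sint L' (subst s' t' 0)" by blast
  have "head (App (Abs s) t) (subst s t 0)" by (rule head_rule)
  moreover have "head\<^sup>*\<^sup>* (subst s t 0) (subst Ls t 0)" using Ls(1) by (rule hstar_subst)
  ultimately have "head\<^sup>*\<^sup>* (App (Abs s) t) L'" using L'(1)
    by (meson converse_rtranclp_into_rtranclp rtranclp_trans)
  with L' show ?case by blast
qed

lemma sint_head_post: "head N N' \<Longrightarrow> sint L N \<Longrightarrow> \<exists>L'. head\<^sup>*\<^sup>* L L' \<and> par L' N'"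
proof (induct arbitrary: L rule: head.induct)
  case (head_rule s t)
  from head_rule obtain l1 t0 where L1: "L = App l1 t0" "sint l1 (Abs s)" "par t0 t"
    by (cases rule: sint.cases) auto
  from L1(2) obtain s0 where "l1 = Abs s0" "sint s0 s" by (cases rule: sint.cases) auto
  with L1 have L: "L = App (Abs s0) t0" "sint s0 s" "par t0 t" by auto
  then have "head L (subst s0 t0 0)" by (auto intro: head.intros)
  moreover have "par (subst s0 t0 0) (subst s t 0)" using L sint_par par_subst by blast
  ultimately show ?case by blast
next
  case (head_appL s t u)
  from head_appL(3) obtain l1 l2 where L: "L = App l1 l2" "sint l1 s" "par l2 u"
    by (cases rule: sint.cases) auto
  from head_appL(2)[OF L(2)] obtain l1' where "head\<^sup>*\<^sup>* l1 l1'" "par l1' t" by blast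
  with L show ?case by (auto intro: hstar_appL par.intros)
next
  case (head_abs s t)
  from head_abs(3) obtain l where L: "L = Abs l" "sint l s"
    by (cases rule: sint.cases) auto
  from head_abs(2)[OF L(2)] obtain l' where "head\<^sup>*\<^sup>* l l'" "par l' t" by blast
  with L show ?case by (auto intro: hstar_abs par.intros)
qed

lemma sint_neutral: "sint s t \<Longrightarrow> neutral t \<Longrightarrow> neutral s"
  by (induct rule: sint.induct) auto

lemma sint_hnfp: "sint s t \<Longrightarrow> hnfp t \<Longrightarrow> hnfp s"
  by (induct rule: sint.induct) (auto intro: sint_neutral)

lemma par_head_nf: "head\<^sup>*\<^sup>* M1 L1 \<Longrightarrow> hnfp L1 \<Longrightarrow> par L M1 \<Longrightarrow> \<exists>L'. head\<^sup>*\<^sup>* L L' \<and> hnfp L'"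
proof (induct arbitrary: L rule: converse_rtranclp_induct)
  case base
  from par_std[OF base(2)] obtain L' where "head\<^sup>*\<^sup>* L L'" "sint L' L1" by blast
  with base(1) show ?case using sint_hnfp by blast
next
  case (step M1 M2)
  from par_std[OF step(5)] obtain L0 where L0: "head\<^sup>*\<^sup>* L L0" "sint L0 M1" by blast
  from sint_head_post[OF step(1) L0(2)] obtain L00 where "head\<^sup>*\<^sup>* L0 L00" "par L00 M2" by blast
  with step(3)[OF step(4)] obtain L' where "head\<^sup>*\<^sup>* L00 L'" "hnfp L'" by blast
  with L0 \<open>head\<^sup>*\<^sup>* L0 L00\<close> show ?case by (meson rtranclp_trans)
qed

lemma beta_hnf_head: "beta\<^sup>*\<^sup>* M N \<Longrightarrow> hnfp N \<Longrightarrow> \<exists>L. head\<^sup>*\<^sup>* M L \<and> hnfp L"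
proof (induct rule: converse_rtranclp_induct)
  case base
  then show ?case by blast
next
  case (step M M1)
  then obtain L1 where "head\<^sup>*\<^sup>* M1 L1" "hnfp L1" by blast
  with beta_par[OF step(1)] show ?case using par_head_nf by blast
qed

lemma hstar_hn: "head\<^sup>*\<^sup>* M L \<Longrightarrow> hnfp L \<Longrightarrow> \<exists>k. hn M k"
proof (induct rule: converse_rtranclp_induct)
  case base
  then show ?case by (auto intro: hn.intros)
next
  case (step M M1)
  then show ?case using hn_back_head by blast
qed

lemma beta_hnf_hsn: "beta\<^sup>*\<^sup>* M N \<Longrightarrow> hnfp N \<Longrightarrow> hsn M"
  using beta_hnf_head hstar_hn hn_hsn by blast



fun plef :: "ptm \<Rightarrow> ptm \<Rightarrow> bool" where
  "plef POmega Q = True"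
| "plef (PVar x) Q = (Q = PVar x)"
| "plef (PApp a b) Q = (case Q of PApp c d \<Rightarrow> plef a c \<and> plef b d | _ \<Rightarrow> False)"
| "plef (PAbs a) Q = (case Q of PAbs c \<Rightarrow> plef a c | _ \<Rightarrow> False)"

lemma plef_refl: "plef P P"
  by (induct P) auto

lemma plef_trans: "plef P Q \<Longrightarrow> plef Q R \<Longrightarrow> plef P R"
proof (induct P arbitrary: Q R)
  case (PApp a b)
  then show ?case by (auto split: ptm.splits)
next
  case (PAbs a)
  then show ?case by (auto split: ptm.splits)
qed auto

lemma plef_ple: "plef P Q \<Longrightarrow> ple P Q"
proof (induct P arbitrary: Q)
  case POmega
  show ?case by (rule ple_Omega)
next
  case (PVar x)
  then show ?case by (auto intro: ple_refl)
next
  case (PApp a b)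
  then show ?case by (auto split: ptm.splits intro: ple_app)
next
  case (PAbs a)
  then show ?case by (auto split: ptm.splits intro: ple_abs)
qed

lemma ple_plef: "ple P Q \<Longrightarrow> plef P Q"
  by (induct rule: ple.induct) (auto intro: plef_refl plef_trans)

lemma ple_iff: "ple P Q \<longleftrightarrow> plef P Q"
  using plef_ple ple_plef by blast

section \<open>monotonicity of omega\<close>

lemma beta_neutral: "beta s t \<Longrightarrow> neutral s \<Longrightarrow> neutral t"
  by (induct rule: beta.induct) auto

lemma beta_omega: "beta s t \<Longrightarrow> plef (omega s) (omega t)"
proof (induct rule: beta.induct)
  case (appL s t u)
  then show ?case by (auto intro: plef_refl dest: beta_neutral)
next
  case (appR s t u)
  then show ?case by (auto intro: plef_refl)
qed auto

lemma betas_omega: "beta\<^sup>*\<^sup>* s t \<Longrightarrow> plef (omega s) (omega t)"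
  by (induct rule: rtranclp_induct) (auto intro: plef_refl plef_trans beta_omega)

primrec absn :: "nat \<Rightarrow> dB \<Rightarrow> dB" where
  "absn 0 M = M"
| "absn (Suc n) M = Abs (absn n M)"

definition apps :: "dB \<Rightarrow> dB list \<Rightarrow> dB" where
  "apps h Ms = foldl App h Ms"

lemma apps_Nil [simp]: "apps h [] = h" by (simp add: apps_def)
lemma apps_snoc [simp]: "apps h (Ms @ [m]) = App (apps h Ms) m" by (simp add: apps_def)
lemma papps_Nil [simp]: "papps h [] = h" by (simp add: papps_def)
lemma papps_snoc [simp]: "papps h (Ms @ [m]) = PApp (papps h Ms) m" by (simp add: papps_def)

lemma neutral_apps [simp]: "neutral (apps (Var x) Ms)"
  by (induct Ms rule: rev_induct) auto

lemma apps_not_Abs [simp]: "apps (Var x) Ms \<noteq> Abs b"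
  by (induct Ms rule: rev_induct) auto

lemma apps_not_Abs2 [simp]: "Abs b \<noteq> apps (Var x) Ms"
  using apps_not_Abs by metis

lemma omega_shape: "omega (absn n (apps (Var x) Ms)) = pabsn n (papps (PVar x) (map omega Ms))"
proof -
  have "omega (apps (Var x) Ms) = papps (PVar x) (map omega Ms)"
    by (induct Ms rule: rev_induct) auto
  then show ?thesis by (induct n) auto
qed

lemma hnfp_shape: "hnfp N \<Longrightarrow> \<exists>n x Ns. N = absn n (apps (Var x) Ns)"
proof (induct N)
  case (Var x)
  then show ?case by (intro exI[of _ 0] exI[of _ x] exI[of _ "[]"]) simp
next
  case (App N1 N2)
  have "neutral M \<Longrightarrow> \<exists>x Ns. M = apps (Var x) Ns" for M
  proof (induct M)
    case (Var x)
    then show ?case by (intro exI[of _ x] exI[of _ "[]"]) simp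
  next
    case (App M1 M2)
    then obtain x Ns where "M1 = apps (Var x) Ns" by auto
    then show ?case by (intro exI[of _ x] exI[of _ "Ns @ [M2]"]) simp
  qed simp
  with App(3) obtain x Ns where "N1 = apps (Var x) Ns" by (metis hnfp.simps(3))
  then show ?case by (intro exI[of _ 0] exI[of _ x] exI[of _ "Ns @ [N2]"]) simp
next
  case (Abs N)
  then obtain n x Ns where "N = absn n (apps (Var x) Ns)" by auto
  then show ?case by (intro exI[of _ "Suc n"] exI[of _ x] exI[of _ Ns]) simp
qed

lemma hnfp_absn: "hnfp (absn n (apps (Var x) Ms))"
  by (induct n) (auto intro: neutral_hnfp)

lemma apps_inj: "apps (Var x) Ps = apps (Var y) Qs \<Longrightarrow> x = y \<and> Ps = Qs"
proof (induct Ps arbitrary: Qs rule: rev_induct)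
  case Nil
  then show ?case by (cases Qs rule: rev_cases) auto
next
  case (snoc p Ps)
  then show ?case by (cases Qs rule: rev_cases) auto
qed

lemma absn_inj: "absn n (apps (Var x) Ps) = absn m (apps (Var y) Qs) \<Longrightarrow> n = m \<and> x = y \<and> Ps = Qs"
proof (induct n arbitrary: m)
  case 0
  then show ?case by (cases m) (auto dest: apps_inj sym)
next
  case (Suc n)
  then show ?case by (cases m) auto
qed

lemma plef_inv_pabsn: "plef (pabsn n P) (omega N) \<Longrightarrow> \<exists>N'. N = absn n N' \<and> plef P (omega N')"
proof (induct n arbitrary: N)
  case 0
  then show ?case by auto
next
  case (Suc n)
  then obtain c where c: "omega N = PAbs c" "plef (pabsn n P) c" by (auto split: ptm.splits)
  then obtain N0 where "N = Abs N0" "omega N0 = c"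
    by (cases N) (auto split: if_splits)
  with c Suc(1)[of N0] show ?case by (metis absn.simps(2))
qed

lemma plef_inv_papps: "plef (papps (PVar x) As) (omega N) \<Longrightarrow>
   \<exists>Ns. N = apps (Var x) Ns \<and> list_all2 (\<lambda>A N. plef A (omega N)) As Ns"
proof (induct As arbitrary: N rule: rev_induct)
  case Nil
  then show ?case by (cases N) (auto split: if_splits)
next
  case (snoc a As)
  then obtain c d where cd: "omega N = PApp c d" "plef (papps (PVar x) As) c" "plef a d"
    by (auto split: ptm.splits)
  then obtain N1 N2 where N: "N = App N1 N2" "omega N1 = c" "omega N2 = d"
    by (cases N) (auto split: if_splits)
  with cd snoc(1)[of N1] obtain Ns where "N1 = apps (Var x) Ns" "list_all2 (\<lambda>A N. plef A (omega N)) As Ns"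
    by auto
  with N cd show ?case by (intro exI[of _ "Ns @ [N2]"]) (auto simp: list_all2_appendI)
qed

lemma plef_shape: "list_all2 plef As Bs \<Longrightarrow> plef (pabsn n (papps (PVar x) As)) (pabsn n (papps (PVar x) Bs))"
proof -
  assume h: "list_all2 plef As Bs"
  have "plef (papps (PVar x) As) (papps (PVar x) Bs)"
    using h
  proof (induct As arbitrary: Bs rule: rev_induct)
    case Nil
    then show ?case by simp
  next
    case (snoc a As)
    then obtain Bs' b where "Bs = Bs' @ [b]" "list_all2 plef As Bs'" "plef a b"
      by (auto simp: list_all2_append1 list_all2_Cons1)
    with snoc(1) show ?case by simp
  qed
  then show ?thesis by (induct n) auto
qed

lemma beta_apps: "beta (apps (Var x) Ms) P \<Longrightarrow> \<exists>Ps. P = apps (Var x) Ps \<and> list_all2 beta\<^sup>*\<^sup>* Ms Ps"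
proof (induct Ms arbitrary: P rule: rev_induct)
  case Nil
  then show ?case by (cases rule: beta.cases) auto
next
  case (snoc m Ms)
  from snoc(2) have "(\<exists>t. P = App t m \<and> beta (apps (Var x) Ms) t) \<or> (\<exists>m'. P = App (apps (Var x) Ms) m' \<and> beta m m')"
    by (cases rule: beta.cases) auto
  then show ?case
  proof
    assume "\<exists>t. P = App t m \<and> beta (apps (Var x) Ms) t"
    then obtain t where "P = App t m" "beta (apps (Var x) Ms) t" by blast
    with snoc(1) obtain Ps where "t = apps (Var x) Ps" "list_all2 beta\<^sup>*\<^sup>* Ms Ps" by blast
    with \<open>P = App t m\<close> show ?thesis
      by (intro exI[of _ "Ps @ [m]"]) (auto intro: list_all2_appendI)
  next
    assume "\<exists>m'. P = App (apps (Var x) Ms) m' \<and> beta m m'"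
    then obtain m' where "P = App (apps (Var x) Ms) m'" "beta m m'" by blast
    then show ?thesis
      by (intro exI[of _ "Ms @ [m']"]) (auto intro: list_all2_appendI list_all2_refl)
  qed
qed

lemma beta_shape: "beta (absn n (apps (Var x) Ms)) P \<Longrightarrow> \<exists>Ps. P = absn n (apps (Var x) Ps) \<and> list_all2 beta\<^sup>*\<^sup>* Ms Ps"
proof (induct n arbitrary: P)
  case 0
  then show ?case using beta_apps by simp
next
  case (Suc n)
  from Suc(2) obtain t where "P = Abs t" "beta (absn n (apps (Var x) Ms)) t"
    by (cases rule: beta.cases) auto
  with Suc(1) show ?case by auto
qed

lemma betas_shape: "beta\<^sup>*\<^sup>* (absn n (apps (Var x) Ms)) P \<Longrightarrow> \<exists>Ps. P = absn n (apps (Var x) Ps) \<and> list_all2 beta\<^sup>*\<^sup>* Ms Ps"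
proof (induct rule: rtranclp_induct)
  case base
  then show ?case by (auto intro: list_all2_refl)
next
  case (step y z)
  then obtain Ps where "y = absn n (apps (Var x) Ps)" "list_all2 beta\<^sup>*\<^sup>* Ms Ps" by blast
  with step(2) have "beta (absn n (apps (Var x) Ps)) z" by simp
  from beta_shape[OF this] obtain Qs where "z = absn n (apps (Var x) Qs)" "list_all2 beta\<^sup>*\<^sup>* Ps Qs" by blast
  moreover have "list_all2 beta\<^sup>*\<^sup>* Ms Qs"
    using list_all2_trans[OF _ \<open>list_all2 beta\<^sup>*\<^sup>* Ms Ps\<close> \<open>list_all2 beta\<^sup>*\<^sup>* Ps Qs\<close>]
      rtranclp_trans[of beta] by blast
  ultimately show ?case by blast
qed



lemma tr_appL: "beta\<^sup>+\<^sup>+ s t \<Longrightarrow> beta\<^sup>+\<^sup>+ (App s u) (App t u)"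
  by (induct rule: tranclp_induct) (auto intro: tranclp.trancl_into_trancl beta.appL)
lemma tr_appR: "beta\<^sup>+\<^sup>+ s t \<Longrightarrow> beta\<^sup>+\<^sup>+ (App u s) (App u t)"
  by (induct rule: tranclp_induct) (auto intro: tranclp.trancl_into_trancl beta.appR)
lemma tr_abs: "beta\<^sup>+\<^sup>+ s t \<Longrightarrow> beta\<^sup>+\<^sup>+ (Abs s) (Abs t)"
  by (induct rule: tranclp_induct) (auto intro: tranclp.trancl_into_trancl beta.abs)

lemma pd_betas: "pd M N \<Longrightarrow> beta\<^sup>*\<^sup>* M N"
  by (induct rule: pd.induct) (auto intro: head_beta rtc_abs rtc_app)

lemma beta_Abs_inv: "beta (Abs P) Y \<Longrightarrow> \<exists>P'. Y = Abs P' \<and> beta P P'"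
  by (cases rule: beta.cases) auto

lemma beta_App_inv: "beta (App P1 P2) Y \<Longrightarrow>
   (\<exists>B. P1 = Abs B) \<or> (\<exists>P'. beta P1 P') \<or> (\<exists>P'. beta P2 P')"
  by (cases rule: beta.cases) auto

lemma pd_plus: "pd M N \<Longrightarrow> (\<exists>N'. beta M N') \<Longrightarrow> beta\<^sup>+\<^sup>+ M N"
proof (induct rule: pd.induct)
  case (pd_head M M')
  then show ?case by (auto intro: head_beta)
next
  case (pd_nf M)
  then show ?case by (auto simp: beta_normal_def)
next
  case (pd_abs P P')
  from pd_abs(5) obtain Y where "beta (Abs P) Y" by blast
  then obtain P0 where "beta P P0" using beta_Abs_inv by blast
  with pd_abs(4) have "beta\<^sup>+\<^sup>+ P P'" by blast
  then show ?case by (rule tr_abs)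
next
  case (pd_app P1 P2 P1' P2')
  from pd_app(7) obtain Y where Y: "beta (App P1 P2) Y" by blast
  have "\<nexists>B. P1 = Abs B"
    using pd_app(1) unfolding head_normal_def by (auto intro: head.intros)
  with beta_App_inv[OF Y] have "(\<exists>P'. beta P1 P') \<or> (\<exists>P'. beta P2 P')" by blast
  then show ?case
  proof
    assume "\<exists>P'. beta P1 P'"
    with pd_app(4) have "beta\<^sup>+\<^sup>+ P1 P1'" by blast
    then have "beta\<^sup>+\<^sup>+ (App P1 P2) (App P1' P2)" by (rule tr_appL)
    moreover have "beta\<^sup>*\<^sup>* (App P1' P2) (App P1' P2')" using pd_betas[OF pd_app(5)] by (rule rtc_appR)
    ultimately show ?thesis by (rule tranclp_rtranclp_tranclp)
  next
    assume "\<exists>P'. beta P2 P'"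
    with pd_app(6) have "beta\<^sup>+\<^sup>+ P2 P2'" by blast
    then have "beta\<^sup>+\<^sup>+ (App P1 P2) (App P1 P2')" by (rule tr_appR)
    moreover have "beta\<^sup>*\<^sup>* (App P1 P2') (App P1' P2')" using pd_betas[OF pd_app(3)] by (rule rtc_appL)
    ultimately show ?thesis by (rule tranclp_rtranclp_tranclp)
  qed
qed

lemma pd_total: "\<exists>N. pd M N"
proof (induct M)
  case (Var x)
  have "beta_normal (Var x)" unfolding beta_normal_def by (auto elim: beta.cases)
  then show ?case by (auto intro: pd_nf)
next
  case (App P1 P2)
  show ?case
  proof (cases "\<exists>N. head (App P1 P2) N")
    case True then show ?thesis by (auto intro: pd_head)
  next
    case False
    show ?thesis
    proof (cases "beta_normal (App P1 P2)")
      case True then show ?thesis by (auto intro: pd_nf)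
    next
      case nb: False
      from App obtain P1' P2' where "pd P1 P1'" "pd P2 P2'" by blast
      moreover have "head_normal (App P1 P2)" unfolding head_normal_def using False by blast
      ultimately show ?thesis using nb pd_app by blast
    qed
  qed
next
  case (Abs P)
  show ?case
  proof (cases "\<exists>N. head (Abs P) N")
    case True then show ?thesis by (auto intro: pd_head)
  next
    case False
    show ?thesis
    proof (cases "beta_normal (Abs P)")
      case True then show ?thesis by (auto intro: pd_nf)
    next
      case nb: False
      from Abs obtain P' where "pd P P'" by blast
      moreover have "head_normal (Abs P)" unfolding head_normal_def using False by blast
      ultimately show ?thesis using nb pd_abs by blast
    qed
  qed
qed

lemma beta_normal_head_normal: "beta_normal M \<Longrightarrow> head_normal M"
  unfolding beta_normal_def head_normal_def using head_beta by blast

lemma pd_nonhnf: "pd M Y \<Longrightarrow> \<not> hnfp M \<Longrightarrow> head M Y"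
  by (cases rule: pd.cases) (auto simp: head_normal_iff dest: beta_normal_head_normal)

lemma beta_normal_Abs: "beta_normal (Abs P) \<Longrightarrow> beta_normal P"
  unfolding beta_normal_def by (auto intro: beta.abs)

lemma beta_normal_App: "beta_normal (App P1 P2) \<Longrightarrow> beta_normal P1 \<and> beta_normal P2"
  unfolding beta_normal_def by (auto intro: beta.appL beta.appR)

lemma pd_Var_inv: "pd (Var x) Y \<Longrightarrow> Y = Var x"
  by (cases rule: pd.cases) (auto elim: head.cases)

lemma pd_Abs_inv: assumes "pd (Abs P) Y" "hnfp P" shows "\<exists>P'. Y = Abs P' \<and> pd P P'"
  using assms(1)
proof (cases rule: pd.cases)
  case pd_head
  with assms(2) show ?thesis using hnfp_no_head by fastforce
next
  case pd_nf
  then show ?thesis by (auto intro: pd.pd_nf dest: beta_normal_Abs)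
qed auto

lemma pd_App_inv: assumes "pd (App P1 P2) Y" "neutral P1"
  shows "\<exists>P1' P2'. Y = App P1' P2' \<and> pd P1 P1' \<and> pd P2 P2'"
  using assms(1)
proof (cases rule: pd.cases)
  case pd_head
  with assms(2) show ?thesis using hnfp_no_head by fastforce
next
  case pd_nf
  then show ?thesis by (auto intro: pd.pd_nf dest: beta_normal_App)
qed auto

lemma pd_shape: "pd (absn n (apps (Var x) Ms)) Y \<Longrightarrow> \<exists>Ms'. Y = absn n (apps (Var x) Ms') \<and> list_all2 pd Ms Ms'"
proof (induct n arbitrary: Y)
  case 0
  then show ?case
  proof (induct Ms arbitrary: Y rule: rev_induct)
    case Nil
    then show ?case using pd_Var_inv by simp
  next
    case (snoc m Ms)
    from snoc(2) obtain P1' m' where "Y = App P1' m'" "pd (apps (Var x) Ms) P1'" "pd m m'"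
      using pd_App_inv by fastforce
    with snoc(1) obtain Ms' where "P1' = apps (Var x) Ms'" "list_all2 pd Ms Ms'" by auto
    with \<open>Y = App P1' m'\<close> \<open>pd m m'\<close> show ?case
      by (intro exI[of _ "Ms' @ [m']"]) (auto intro: list_all2_appendI)
  qed
next
  case (Suc n)
  from Suc(2) obtain P' where "Y = Abs P'" "pd (absn n (apps (Var x) Ms)) P'"
    using pd_Abs_inv hnfp_absn by fastforce
  with Suc(1) show ?case by auto
qed

lemma hsn_seq: "hsn M \<Longrightarrow> f 0 = M \<Longrightarrow> \<forall>n. pd (f n) (f (Suc n)) \<Longrightarrow> \<exists>m. hnfp (f m)"
proof (induct arbitrary: f rule: hsn_induct)
  case (step M)
  show ?case
  proof (cases "hnfp M")
    case True with step show ?thesis by auto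
  next
    case False
    with step have "head M (f 1)" using pd_nonhnf by (metis One_nat_def)
    from step(2)[OF this, of "\<lambda>n. f (Suc n)"] step(4) obtain m where "hnfp (f (Suc m))" by auto
    then show ?thesis by blast
  qed
qed

lemma seq_betas: "\<forall>n. pd (f n) (f (Suc n)) \<Longrightarrow> k \<le> K \<Longrightarrow> beta\<^sup>*\<^sup>* (f k) (f K)"
proof (induct K)
  case 0
  then show ?case by simp
next
  case (Suc K)
  show ?case
  proof (cases "k = Suc K")
    case True then show ?thesis by simp
  next
    case False
    with Suc have "beta\<^sup>*\<^sup>* (f k) (f K)" by simp
    moreover have "beta\<^sup>*\<^sup>* (f K) (f (Suc K))" using Suc(2) pd_betas by blast
    ultimately show ?thesis by (rule rtranclp_trans)
  qed
qed

fun strip :: "nat \<Rightarrow> dB \<Rightarrow> dB" where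
  "strip 0 M = M"
| "strip (Suc n) (Abs M) = strip n M"
| "strip (Suc n) M = M"

fun args :: "dB \<Rightarrow> dB list" where
  "args (App a b) = args a @ [b]"
| "args _ = []"

lemma strip_absn [simp]: "strip n (absn n M) = M"
  by (induct n) auto

lemma args_apps [simp]: "args (apps (Var x) Ms) = Ms"
  by (induct Ms rule: rev_induct) auto



lemma main_approx:
  "pnf Q \<Longrightarrow> \<forall>f N. (\<forall>n. pd (f n) (f (Suc n))) \<longrightarrow> beta\<^sup>*\<^sup>* (f 0) N \<longrightarrow> plef Q (omega N)
      \<longrightarrow> (\<exists>n. plef Q (omega (f n)))"
proof (induct rule: pnf.induct)
  case pnf_Omega
  then show ?case by auto
next
  case (pnf_hd As n x)
  show ?case
  proof (intro allI impI)
    fix f N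
    assume fpd: "\<forall>n. pd (f n) (f (Suc n))" and fN: "beta\<^sup>*\<^sup>* (f 0) N"
      and QN: "plef (pabsn n (papps (PVar x) As)) (omega N)"
    from plef_inv_pabsn[OF QN] obtain N' where N': "N = absn n N'" "plef (papps (PVar x) As) (omega N')"
      by blast
    from plef_inv_papps[OF N'(2)] obtain Ns where Ns: "N' = apps (Var x) Ns"
      "list_all2 (\<lambda>A N. plef A (omega N)) As Ns" by blast
    have Nsh: "N = absn n (apps (Var x) Ns)" using N' Ns by simp
    have "hsn (f 0)" using beta_hnf_hsn[OF fN] Nsh hnfp_absn by simp
    from hsn_seq[OF this refl fpd] obtain m where "hnfp (f m)" by blast
    from hnfp_shape[OF this] obtain p y Ms where fm: "f m = absn p (apps (Var y) Ms)" by blast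
    have "beta\<^sup>*\<^sup>* (f 0) (f m)" using seq_betas[OF fpd] by simp
    from beta_confl[OF this fN] obtain P where P: "beta\<^sup>*\<^sup>* (f m) P" "beta\<^sup>*\<^sup>* N P" by blast
    from betas_shape[OF P(1)[unfolded fm]] obtain Ps where Ps: "P = absn p (apps (Var y) Ps)"
      "list_all2 beta\<^sup>*\<^sup>* Ms Ps" by blast
    from betas_shape[OF P(2)[unfolded Nsh]] obtain Ps' where Ps': "P = absn n (apps (Var x) Ps')"
      "list_all2 beta\<^sup>*\<^sup>* Ns Ps'" by blast
    from absn_inj[of p y Ps n x Ps'] Ps Ps' have eq: "p = n" "y = x" "Ps' = Ps" by auto
    define G where "G k = args (strip n (f (m + k)))" for k
    have Gsh: "f (m + k) = absn n (apps (Var x) (G k))" for k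
    proof (induct k)
      case 0
      then show ?case using fm eq by (simp add: G_def)
    next
      case (Suc k)
      have "pd (f (m + k)) (f (Suc (m + k)))" using fpd by blast
      with Suc have "pd (absn n (apps (Var x) (G k))) (f (m + Suc k))" by simp
      from pd_shape[OF this] obtain Ms' where "f (m + Suc k) = absn n (apps (Var x) Ms')" by blast
      then show ?case by (simp add: G_def)
    qed
    have Gpd: "list_all2 pd (G k) (G (Suc k))" for k
    proof -
      have "pd (f (m + k)) (f (Suc (m + k)))" using fpd by blast
      then have "pd (absn n (apps (Var x) (G k))) (absn n (apps (Var x) (G (Suc k))))"
        using Gsh[of k] Gsh[of "Suc k"] by simp
      from pd_shape[OF this] obtain Ms' where "absn n (apps (Var x) (G (Suc k))) = absn n (apps (Var x) Ms')"
        "list_all2 pd (G k) Ms'" by blast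
      then show ?thesis using absn_inj[of n x "G (Suc k)" n x Ms'] by simp
    qed
    have G0: "G 0 = Ms" using fm eq by (simp add: G_def)
    have lenG: "length (G k) = length Ms" for k
    proof (induct k)
      case 0 then show ?case by (simp add: G0)
    next
      case (Suc k) then show ?case using list_all2_lengthD[OF Gpd[of k]] by simp
    qed
    have lenAs: "length As = length Ns" using Ns(2) list_all2_lengthD by blast
    have lenNs: "length Ns = length Ps" using Ps'(2) eq list_all2_lengthD by blast
    have lenMs: "length Ms = length Ps" using Ps(2) list_all2_lengthD by blast
    let ?len = "length As"
    have comp: "\<exists>k. plef (As ! i) (omega (G k ! i))" if i: "i < ?len" for i
    proof -
      define h where "h k = G k ! i" for k
      have hpd: "\<forall>k. pd (h k) (h (Suc k))"
      proof
        fix k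
        have "i < length (G k)" using i lenG lenAs lenNs lenMs by simp
        with Gpd[of k] show "pd (h k) (h (Suc k))" unfolding h_def by (rule list_all2_nthD)
      qed
      have h0: "h 0 = Ms ! i" by (simp add: h_def G0)
      have MP: "beta\<^sup>*\<^sup>* (Ms ! i) (Ps ! i)" using list_all2_nthD[OF Ps(2)] i lenAs lenNs lenMs by simp
      have "plef (As ! i) (omega (Ns ! i))" using list_all2_nthD[OF Ns(2)] i by simp
      moreover have "beta\<^sup>*\<^sup>* (Ns ! i) (Ps ! i)" using list_all2_nthD[OF Ps'(2)] eq i lenAs by simp
      ultimately have AP: "plef (As ! i) (omega (Ps ! i))" using betas_omega plef_trans by blast
      have "As ! i \<in> set As" using i by simp
      with pnf_hd have IH: "\<forall>f N. (\<forall>n. pd (f n) (f (Suc n))) \<longrightarrow> beta\<^sup>*\<^sup>* (f 0) N \<longrightarrow>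
          plef (As ! i) (omega N) \<longrightarrow> (\<exists>n. plef (As ! i) (omega (f n)))" by blast
      have "beta\<^sup>*\<^sup>* (h 0) (Ps ! i)" using h0 MP by simp
      from IH[rule_format, OF hpd[rule_format] this AP] have "\<exists>k. plef (As ! i) (omega (h k))" .
      then show ?thesis by (simp add: h_def)
    qed
    have "\<forall>i. \<exists>k. i < ?len \<longrightarrow> plef (As ! i) (omega (G k ! i))" using comp by blast
    then have "\<exists>nf. \<forall>i. i < ?len \<longrightarrow> plef (As ! i) (omega (G (nf i) ! i))" by (rule choice)
    then obtain nf where nf: "\<forall>i<?len. plef (As ! i) (omega (G (nf i) ! i))" by blast
    define K where "K = Max (nf ` {..<?len})"
    have "plef (As ! i) (omega (G K ! i))" if i: "i < ?len" for i
    proof -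
      have "nf i \<le> K" unfolding K_def using i by (intro Max_ge) auto
      moreover have "\<forall>k. pd (G k ! i) (G (Suc k) ! i)"
      proof
        fix k
        have "i < length (G k)" using i lenG lenAs lenNs lenMs by simp
        with Gpd[of k] show "pd (G k ! i) (G (Suc k) ! i)" by (rule list_all2_nthD)
      qed
      ultimately have "beta\<^sup>*\<^sup>* (G (nf i) ! i) (G K ! i)"
        using seq_betas[of "\<lambda>k. G k ! i"] by blast
      then show ?thesis using nf i betas_omega plef_trans by blast
    qed
    then have "list_all2 plef As (map omega (G K))"
      using lenG lenAs lenNs lenMs by (intro list_all2_all_nthI) auto
    then have "plef (pabsn n (papps (PVar x) As)) (omega (f (m + K)))"
      using Gsh[of K] omega_shape plef_shape by simp
    then show "\<exists>n'. plef (pabsn n (papps (PVar x) As)) (omega (f n'))" by blast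
  qed
qed

lemma max_seq_pd: "max_seq pd M f \<Longrightarrow> \<forall>n. pd (f n) (f (Suc n))"
  unfolding max_seq_def using pd_total by blast

lemma lim_pd: "max_seq pd M f \<Longrightarrow> (\<Union>n. obs (f n)) = BT M"
proof -
  assume ms: "max_seq pd M f"
  then have fpd: "\<forall>n. pd (f n) (f (Suc n))" and f0: "f 0 = M"
    using max_seq_pd max_seq_def by auto
  show ?thesis
  proof
    show "(\<Union>n. obs (f n)) \<subseteq> BT M"
    proof
      fix Q assume "Q \<in> (\<Union>n. obs (f n))"
      then obtain n where "Q \<in> obs (f n)" by blast
      moreover have "beta\<^sup>*\<^sup>* M (f n)" using seq_betas[OF fpd, of 0 n] f0 by simp
      ultimately show "Q \<in> BT M" unfolding obs_def BT_def by blast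
    qed
  next
    show "BT M \<subseteq> (\<Union>n. obs (f n))"
    proof
      fix Q assume "Q \<in> BT M"
      then obtain N where N: "beta\<^sup>*\<^sup>* M N" "pnf Q" "ple Q (omega N)"
        unfolding BT_def down_def by blast
      have "beta\<^sup>*\<^sup>* (f 0) N" using N(1) f0 by simp
      moreover have "plef Q (omega N)" using N(3) ple_iff by blast
      ultimately have "\<exists>n. plef Q (omega (f n))"
        using main_approx[OF N(2), rule_format, of f N] fpd by blast
      then obtain n where "ple Q (omega (f n))" using ple_iff by blast
      with N(2) have "Q \<in> obs (f n)" unfolding obs_def down_def by blast
      then show "Q \<in> (\<Union>n. obs (f n))" by blast
    qed
  qed
qed

lemma exists_pd_seq: "\<exists>f. max_seq pd M f"
proof -
  define g where "g X = (SOME Y. pd X Y)" for X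
  have g: "pd X (g X)" for X unfolding g_def using pd_total by (rule someI_ex)
  define f where "f n = (g ^^ n) M" for n
  have "max_seq pd M f" unfolding max_seq_def f_def using g by auto
  then show ?thesis by blast
qed

lemma beta_seq_reach: "max_seq beta M f \<Longrightarrow> beta\<^sup>*\<^sup>* M (f n)"
proof (induct n)
  case 0 then show ?case by (simp add: max_seq_def)
next
  case (Suc n)
  then have "beta (f n) (f (Suc n)) \<or> f (Suc n) = f n" unfolding max_seq_def by blast
  with Suc show ?case by (auto intro: rtranclp.rtrancl_into_rtrancl)
qed

lemma beta_lim_sub: "obs_lim beta M q \<Longrightarrow> q \<subseteq> BT M"
proof -
  assume "obs_lim beta M q"
  then obtain f where f: "max_seq beta M f" "q = (\<Union>n. obs (f n))" unfolding obs_lim_def by blast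
  show ?thesis
  proof
    fix Q assume "Q \<in> q"
    with f obtain n where "Q \<in> obs (f n)" by blast
    with beta_seq_reach[OF f(1)] show "Q \<in> BT M" unfolding obs_def BT_def by blast
  qed
qed

lemma lim_pd_eq: "r \<in> Lim M pd \<longleftrightarrow> r = BT M"
proof
  assume "r \<in> Lim M pd"
  then obtain f where "max_seq pd M f" "(\<Union>n. obs (f n)) = r" unfolding Lim_def obs_lim_def by blast
  then show "r = BT M" using lim_pd by simp
next
  assume r: "r = BT M"
  obtain f where f: "max_seq pd M f" using exists_pd_seq by blast
  then have "(\<Union>n. obs (f n)) = r" using lim_pd r by simp
  with f show "r \<in> Lim M pd" unfolding Lim_def obs_lim_def by blast
qed

theorem mainTheorem18:
  shows "multistep_strategy pd beta \<and> obs_normalizing pd beta \<and> (\<forall>M. BT M \<in> Lim M pd)"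
proof (intro conjI)
  show "multistep_strategy pd beta"
    unfolding multistep_strategy_def
  proof (intro conjI allI impI)
    fix M N assume "pd M N" then show "beta\<^sup>*\<^sup>* M N" by (rule pd_betas)
  next
    fix M N assume "pd M N" "\<exists>N'. beta M N'" then show "beta\<^sup>+\<^sup>+ M N" by (rule pd_plus)
  next
    fix M show "\<exists>N. pd M N" by (rule pd_total)
  qed
  show "obs_normalizing pd beta"
    unfolding obs_normalizing_def asympt_complete_def asympt_uniform_def
  proof (intro conjI allI impI ballI)
    fix M q assume "obs_lim beta M q"
    then have "q \<subseteq> BT M" by (rule beta_lim_sub)
    moreover have "BT M \<in> Lim M pd" using lim_pd_eq by simp
    then have "obs_lim pd M (BT M)" unfolding Lim_def by simp
    ultimately show "\<exists>p. obs_lim pd M p \<and> q \<subseteq> p" by blast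
  next
    fix M r r' assume "r \<in> Lim M pd" "r' \<in> Lim M pd"
    then show "r' = r" using lim_pd_eq by simp
  qed
  show "\<forall>M. BT M \<in> Lim M pd" using lim_pd_eq by simp
qed

end
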